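(* Let $\gamma>1$, $\varepsilon>0$, $L>0$, $T>0$, $\Omega=(-L,L)$, and let $F_1,F_2,G_1,G_2$ be feasible growth functions. Let $n^{(1)}_{\gamma,\mathrm{init}},n^{(2)}_{\gamma,\mathrm{init}}\ge0$ be initial data supported in $\Omega$ and let $(n_{\gamma,\varepsilon}^{(1)},n_{\gamma,\varepsilon}^{(2)})$ solve the regularised problem on $Q_T=\Omega\times(0,T)$ (see context), with $n_{\gamma,\varepsilon}=n_{\gamma,\varepsilon}^{(1)}+n_{\gamma,\varepsilon}^{(2)}$. Let $R_\infty>0$ be an $L^\infty$ bound for $|R_{\gamma,\varepsilon}|$, where $R_{\gamma,\varepsilon}=c^{(1)}_{\gamma,\varepsilon}F(p_{\gamma,\varepsilon})+c^{(2)}_{\gamma,\varepsilon}G(p_{\gamma,\varepsilon})$. Then for $t\in(0,T]$, \[ n_{\gamma,\varepsilon}(t,x)\ \ge\ \underline n_\gamma(t):=2\varepsilon e^{-R_\infty t}>0 . \]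
   Context: Feasible growth functions: $F_1,F_2,G_1,G_2:[0,\infty)\to\mathbb{R}$ are $C^1$ with bounded derivatives; for all $p\ge0$, $F_1'(p)<0$, $G_2'(p)<0$, $F_2'(p)\le 0$, $G_1'(p)\le 0$; there exists $P_H>0$ such that for all $p\ge P_H$: $F_1(p)\le0$, $G_2(p)\le 0$, $F_2(p)=G_1(p)=0$; and $F(0)=G(0)$ with $F:=F_1+F_2$, $G:=G_1+G_2$. Regularised problem: $n^{(i)}_{\gamma,\varepsilon}$ solve on $Q_T$ $\partial_t n^{(1)}_{\gamma,\varepsilon}=\partial_x(n^{(1)}_{\gamma,\varepsilon}\partial_xp_{\gamma,\varepsilon})+n^{(1)}_{\gamma,\varepsilon}F_1(p_{\gamma,\varepsilon})+n^{(2)}_{\gamma,\varepsilon}G_1(p_{\gamma,\varepsilon})$, $\partial_t n^{(2)}_{\gamma,\varepsilon}=\partial_x(n^{(2)}_{\gamma,\varepsilon}\partial_xp_{\gamma,\varepsilon})+n^{(1)}_{\gamma,\varepsilon}F_2(p_{\gamma,\varepsilon})+n^{(2)}_{\gamma,\varepsilon}G_2(p_{\gamma,\varepsilon})$, with $p_{\gamma,\varepsilon}=n_{\gamma,\varepsilon}^\gamma$, initial data $n^{(i)}_{\gamma,\varepsilon}(0)=n^{(i)}_{\gamma,\mathrm{init}}+\varepsilon$, and homogeneous Neumann boundary conditions $\partial_x n_{\gamma,\varepsilon}(t,\pm L)=0$; the total density satisfies (in the strong sense) $\partial_t n_{\gamma,\varepsilon}-\frac{\gamma}{\gamma+1}\partial_x^2(n_{\gamma,\varepsilon}^{\gamma+1})=n_{\gamma,\varepsilon}R_{\gamma,\varepsilon}$.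 The fractions are $c^{(i)}_{\gamma,\varepsilon}=n^{(i)}_{\gamma,\varepsilon}/n_{\gamma,\varepsilon}$. *)

theory Defs
  imports "HOL-Analysis.Analysis"
begin

definition C1_bdd_deriv :: "(real \<Rightarrow> real) \<Rightarrow> (real \<Rightarrow> real) \<Rightarrow> bool" where
  "C1_bdd_deriv f f' \<longleftrightarrow>
     (\<forall>p\<ge>0. (f has_real_derivative f' p) (at p within {0..})) \<and>
     continuous_on {0..} f' \<and> bounded (f' ` {0..})"

text \<open>Feasible growth functions (F = F1+F2, G = G1+G2).\<close>
definition feasible_growth ::
  "(real \<Rightarrow> real) \<Rightarrow> (real \<Rightarrow> real) \<Rightarrow> (real \<Rightarrow> real) \<Rightarrow> (real \<Rightarrow> real) \<Rightarrow> bool" where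
  "feasible_growth F1 F2 G1 G2 \<longleftrightarrow>
     (\<exists>F1' F2' G1' G2'.
        C1_bdd_deriv F1 F1' \<and> C1_bdd_deriv F2 F2' \<and> C1_bdd_deriv G1 G1' \<and> C1_bdd_deriv G2 G2' \<and>
        (\<forall>p\<ge>0. F1' p < 0 \<and> G2' p < 0 \<and> F2' p \<le> 0 \<and> G1' p \<le> 0)) \<and>
     (\<exists>PH>0. \<forall>p\<ge>PH. F1 p \<le> 0 \<and> G2 p \<le> 0 \<and> F2 p = 0 \<and> G1 p = 0) \<and>
     F1 0 + F2 0 = G1 0 + G2 0"

definition tot_density :: "(real \<Rightarrow> real \<Rightarrow> real) \<Rightarrow> (real \<Rightarrow> real \<Rightarrow> real) \<Rightarrow> real \<Rightarrow> real \<Rightarrow> real" where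
  "tot_density n1 n2 t x = n1 t x + n2 t x"

definition pressure :: "real \<Rightarrow> (real \<Rightarrow> real \<Rightarrow> real) \<Rightarrow> (real \<Rightarrow> real \<Rightarrow> real) \<Rightarrow> real \<Rightarrow> real \<Rightarrow> real" where
  "pressure \<gamma> n1 n2 t x = tot_density n1 n2 t x powr \<gamma>"

definition growth_R ::
  "real \<Rightarrow> (real \<Rightarrow> real) \<Rightarrow> (real \<Rightarrow> real) \<Rightarrow> (real \<Rightarrow> real) \<Rightarrow> (real \<Rightarrow> real) \<Rightarrow>
   (real \<Rightarrow> real \<Rightarrow> real) \<Rightarrow> (real \<Rightarrow> real \<Rightarrow> real) \<Rightarrow> real \<Rightarrow> real \<Rightarrow> real" where
  "growth_R \<gamma> F1 F2 G1 G2 n1 n2 t x =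
     (let P = pressure \<gamma> n1 n2 t x; N = tot_density n1 n2 t x in
      (n1 t x / N) * (F1 P + F2 P) + (n2 t x / N) * (G1 P + G2 P))"

definition regularised_solution ::
  "real \<Rightarrow> real \<Rightarrow> real \<Rightarrow> real \<Rightarrow>
   (real \<Rightarrow> real) \<Rightarrow> (real \<Rightarrow> real) \<Rightarrow> (real \<Rightarrow> real) \<Rightarrow> (real \<Rightarrow> real) \<Rightarrow>
   (real \<Rightarrow> real) \<Rightarrow> (real \<Rightarrow> real) \<Rightarrow>
   (real \<Rightarrow> real \<Rightarrow> real) \<Rightarrow> (real \<Rightarrow> real \<Rightarrow> real) \<Rightarrow> bool" where
  "regularised_solution \<gamma> \<epsilon> L T F1 F2 G1 G2 ni1 ni2 n1 n2 \<longleftrightarrow>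
    (let p = pressure \<gamma> n1 n2; n = tot_density n1 n2 in
     (\<forall>t\<in>{0..T}. \<forall>x\<in>{-L..L}. n1 t x \<ge> 0 \<and> n2 t x \<ge> 0) \<and>
     continuous_on ({0..T} \<times> {-L..L}) (\<lambda>(t,x). n1 t x) \<and>
     continuous_on ({0..T} \<times> {-L..L}) (\<lambda>(t,x). n2 t x) \<and>
     (\<forall>x\<in>{-L..L}. n1 0 x = ni1 x + \<epsilon> \<and> n2 0 x = ni2 x + \<epsilon>) \<and>
     (\<forall>t\<in>{0<..<T}. \<forall>x\<in>{-L..L}.
        (\<lambda>y. n1 t y) differentiable (at x within {-L..L}) \<and>
        (\<lambda>y. n2 t y) differentiable (at x within {-L..L})) \<and>
     (\<forall>t\<in>{0<..<T}.
        ((\<lambda>y. n t y) has_real_derivative 0) (at L within {-L..L}) \<and>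
        ((\<lambda>y. n t y) has_real_derivative 0) (at (-L) within {-L..L})) \<and>
     (\<forall>t\<in>{0<..<T}. \<forall>x\<in>{-L<..<L}.
        (\<lambda>y. p t y) differentiable (at x) \<and>
        (\<exists>d1 d2.
          ((\<lambda>y. n1 t y * deriv (\<lambda>z. p t z) y) has_real_derivative d1) (at x) \<and>
          ((\<lambda>y. n2 t y * deriv (\<lambda>z. p t z) y) has_real_derivative d2) (at x) \<and>
          ((\<lambda>s. n1 s x) has_real_derivative
              (d1 + n1 t x * F1 (p t x) + n2 t x * G1 (p t x))) (at t) \<and>
          ((\<lambda>s. n2 s x) has_real_derivative
              (d2 + n1 t x * F2 (p t x) + n2 t x * G2 (p t x))) (at t))))"

end

theory Submission
  imports Defs
begin

lemma ae_cont_bound: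
  fixes f :: "real \<times> real \<Rightarrow> real"
  assumes ae: "AE z in lborel. z \<in> U \<longrightarrow> \<bar>f z\<bar> \<le> c"
    and U: "open U" and z0: "z0 \<in> U" and cont: "isCont f z0"
  shows "\<bar>f z0\<bar> \<le> c"
proof (rule ccontr)
  assume "\<not> \<bar>f z0\<bar> \<le> c"
  hence gt: "\<bar>f z0\<bar> > c" by simp
  have "open {z. \<bar>f z\<bar> > c} \<or> True" by simp
  have "\<forall>\<^sub>F z in at z0. \<bar>f z\<bar> > c"
    using cont gt unfolding isCont_def
    by (intro order_tendstoD(1)) (auto intro: tendsto_rabs)
  moreover have "\<forall>\<^sub>F z in at z0. z \<in> U"
    using U z0 by (simp add: eventually_at_topological) blast
  ultimately have "\<forall>\<^sub>F z in at z0. z \<in> U \<and> \<bar>f z\<bar> > c"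
    by (auto elim: eventually_mono eventually_conj)
  then obtain e where e: "e > 0" and he: "\<And>z. z \<noteq> z0 \<Longrightarrow> dist z z0 < e \<Longrightarrow> z \<in> U \<and> \<bar>f z\<bar> > c"
    unfolding eventually_at by blast
  have sub: "ball z0 e \<subseteq> {z. \<not> (z \<in> U \<longrightarrow> \<bar>f z\<bar> \<le> c)}"
  proof
    fix z assume "z \<in> ball z0 e"
    hence "dist z z0 < e" by (simp add: dist_commute)
    thus "z \<in> {z. \<not> (z \<in> U \<longrightarrow> \<bar>f z\<bar> \<le> c)}"
      using he[of z] gt z0 by (cases "z = z0") auto
  qed
  obtain N where N: "N \<in> null_sets lborel" "{z. \<not> (z \<in> U \<longrightarrow> \<bar>f z\<bar> \<le> c)} \<subseteq> N"
    using ae unfolding eventually_ae_filter by auto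
  have "emeasure lborel (ball z0 e) \<le> emeasure lborel N"
    using N sub by (intro emeasure_mono) auto
  also have "\<dots> = 0" using N by auto
  finally have "emeasure lborel (ball z0 e) = 0" by simp
  moreover have "emeasure lborel (ball z0 e) > 0"
    using e by (simp add: emeasure_ball)
  ultimately show False by simp
qed

lemma spatial_bound:
  fixes n :: "real \<Rightarrow> real" and \<gamma> a \<delta> d x1 :: real and U :: "real set"
  assumes g: "\<gamma> > 0" and a: "a > 0" and dl: "\<delta> > 0" and U: "open U" and x1: "x1 \<in> U"
    and pos: "\<forall>y\<in>U. n y > 0"
    and diff: "\<forall>y\<in>U. n differentiable (at y)"
    and minx: "\<forall>y\<in>U. a * n x1 + \<delta> * x1\<^sup>2 \<le> a * n y + \<delta> * y\<^sup>2"
    and dd: "((\<lambda>y. n y * deriv (\<lambda>z. n z powr \<gamma>) y) has_real_derivative d) (at x1)"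
  shows "a * d \<ge> - 2 * \<delta> * \<gamma> * (n x1 powr \<gamma>)"
proof -
  define n' where "n' = deriv n"
  have dn: "(n has_real_derivative n' y) (at y)" if "y \<in> U" for y
    using diff that unfolding n'_def by (simp add: DERIV_deriv_iff_real_differentiable)
  have dp: "((\<lambda>z. n z powr \<gamma>) has_real_derivative \<gamma> * n y powr (\<gamma> - 1) * n' y) (at y)"
    if "y \<in> U" for y
    using DERIV_fun_powr[OF dn[OF that], of \<gamma>] pos that by simp
  have gU: "n y * deriv (\<lambda>z. n z powr \<gamma>) y = \<gamma> * n y powr \<gamma> * n' y" if "y \<in> U" for y
  proof -
    have "deriv (\<lambda>z. n z powr \<gamma>) y = \<gamma> * n y powr (\<gamma> - 1) * n' y"
      using dp[OF that] by (rule DERIV_imp_deriv)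
    moreover have "n y * n y powr (\<gamma> - 1) = n y powr \<gamma>"
    proof -
      have "0 < n y" using pos that by auto
      thus ?thesis using powr_mult_base[of "n y" "\<gamma> - 1"] by simp
    qed
    ultimately show ?thesis by (metis mult.assoc mult.left_commute)
  qed
  define \<phi> where "\<phi> y = a * n y + \<delta> * y\<^sup>2" for y
  define \<phi>' where "\<phi>' y = a * n' y + 2 * \<delta> * y" for y
  have dphi: "(\<phi> has_real_derivative \<phi>' y) (at y)" if "y \<in> U" for y
    unfolding \<phi>_def \<phi>'_def
    by (rule derivative_eq_intros dn[OF that] refl)+ simp
  obtain r where r: "r > 0" "ball x1 r \<subseteq> U" using U x1 openE by blast
  have phi0: "\<phi>' x1 = 0"
  proof (rule DERIV_local_min[OF dphi[OF x1] r(1)])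
    show "\<forall>y. \<bar>x1 - y\<bar> < r \<longrightarrow> \<phi> x1 \<le> \<phi> y"
      using r minx unfolding \<phi>_def by (auto simp: dist_real_def subset_iff)
  qed
  define \<psi> where "\<psi> y = n y * deriv (\<lambda>z. n z powr \<gamma>) y + \<gamma> * (n y powr \<gamma>) * (2 * \<delta> / a * y)" for y
  define D where "D = d + \<gamma> * ((\<gamma> * n x1 powr (\<gamma> - 1) * n' x1) * (2 * \<delta> / a * x1) + n x1 powr \<gamma> * (2 * \<delta> / a))"
  have dpsi: "(\<psi> has_real_derivative D) (at x1)"
    unfolding \<psi>_def D_def
    by (rule derivative_eq_intros dd dp[OF x1] refl)+ (simp add: algebra_simps)
  have psiU: "\<psi> y = \<gamma> * n y powr \<gamma> / a * \<phi>' y" if "y \<in> U" for y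
    using gU[OF that] a unfolding \<psi>_def \<phi>'_def by (simp add: field_simps)
  have D0: "D \<ge> 0"
  proof (rule ccontr)
    assume "\<not> D \<ge> 0"
    hence "D < 0" by simp
    from DERIV_neg_dec_right[OF dpsi this] obtain h0 where h0: "h0 > 0"
      "\<And>h. h > 0 \<Longrightarrow> h < h0 \<Longrightarrow> \<psi> (x1 + h) < \<psi> x1" by blast
    have psi0: "\<psi> x1 = 0" using psiU[OF x1] phi0 by simp
    define h where "h = min (h0/2) (r/2)"
    have h: "h > 0" "h < h0" "h < r" using h0 r by (auto simp: h_def)
    have inU: "x1 + t \<in> U" if "0 \<le> t" "t \<le> h" for t
      using that h r by (auto simp: dist_real_def subset_iff)
    have neg: "\<phi>' (x1 + t) < 0" if "0 < t" "t \<le> h" for t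
    proof -
      have "\<psi> (x1 + t) < 0" using h0(2)[of t] that h psi0 by simp
      moreover have "\<gamma> * n (x1 + t) powr \<gamma> / a > 0"
      proof -
        have "n (x1 + t) > 0" using pos inU[of t] that by auto
        thus ?thesis using g a by simp
      qed
      ultimately have "(\<gamma> * n (x1 + t) powr \<gamma> / a) * \<phi>' (x1 + t) < 0"
        and "\<gamma> * n (x1 + t) powr \<gamma> / a > 0" using psiU[OF inU[of t]] that by auto
      moreover have gen: "\<And>c v::real. c * v < 0 \<Longrightarrow> c > 0 \<Longrightarrow> v < 0"
        by (simp add: mult_less_0_iff)
      ultimately show ?thesis by blast
    qed
    have "\<exists>z. x1 < z \<and> z < x1 + h \<and> \<phi> (x1 + h) - \<phi> x1 = (x1 + h - x1) * \<phi>' z"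
    proof (rule MVT2[of x1 "x1 + h" \<phi> \<phi>'])
      show "x1 < x1 + h" using h by simp
      fix x assume "x1 \<le> x" "x \<le> x1 + h"
      thus "(\<phi> has_real_derivative \<phi>' x) (at x)" using dphi inU[of "x - x1"] by simp
    qed
    then obtain z where z: "x1 < z" "z < x1 + h" "\<phi> (x1 + h) - \<phi> x1 = (x1 + h - x1) * \<phi>' z"
      by blast
    have "\<phi>' z < 0" using neg[of "z - x1"] z by simp
    hence "h * \<phi>' z < 0" using h(1) by (simp add: mult_pos_neg)
    hence "\<phi> (x1 + h) < \<phi> x1" using z by simp
    moreover have "\<phi> x1 \<le> \<phi> (x1 + h)" using minx inU[of h] h unfolding \<phi>_def by simp
    ultimately show False by simp
  qed
  have key: "n' x1 * x1 \<le> 0"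
  proof -
    have "a * n' x1 = - 2 * \<delta> * x1" using phi0 unfolding \<phi>'_def by simp
    hence "a * n' x1 * x1 = - 2 * \<delta> * x1 * x1" by simp
    hence "a * (n' x1 * x1) = - 2 * \<delta> * x1\<^sup>2" by (simp add: power2_eq_square mult.assoc)
    hence "a * (n' x1 * x1) \<le> 0" using dl by simp
    thus ?thesis using a by (simp add: mult_le_0_iff)
  qed
  have t2: "\<gamma> * n x1 powr (\<gamma> - 1) * (n' x1 * x1) \<le> 0"
    using key g by (simp add: mult_nonneg_nonpos)
  have "a * D = a * d + 2 * \<delta> * \<gamma> * (\<gamma> * n x1 powr (\<gamma> - 1) * (n' x1 * x1)) + 2 * \<delta> * \<gamma> * n x1 powr \<gamma>"
    unfolding D_def using a by (simp add: field_simps)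
  moreover have "a * D \<ge> 0" using D0 a by simp
  moreover have "2 * \<delta> * \<gamma> * (\<gamma> * n x1 powr (\<gamma> - 1) * (n' x1 * x1)) \<le> 0"
    using t2 dl g by (simp add: mult_nonneg_nonpos)
  ultimately show ?thesis by linarith
qed


lemma boundary_right:
  fixes f :: "real \<Rightarrow> real"
  assumes df: "(f has_real_derivative 0) (at L within {-L..L})" and L: "L > 0"
    and dl: "\<delta> > 0" and a: "a > 0"
    and mn: "\<forall>y\<in>{-L..L}. a * f L + \<delta> * L\<^sup>2 \<le> a * f y + \<delta> * y\<^sup>2"
  shows False
proof -
  have "((\<lambda>y. a * f y + \<delta> * y\<^sup>2) has_real_derivative a * 0 + \<delta> * (2 * L)) (at L within {-L..L})"
    by (rule derivative_eq_intros df refl)+ simp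
  moreover have "a * 0 + \<delta> * (2 * L) > 0" using dl L by simp
  ultimately obtain d where d: "d > 0"
    "\<And>h. h > 0 \<Longrightarrow> L - h \<in> {-L..L} \<Longrightarrow> h < d \<Longrightarrow> a * f (L - h) + \<delta> * (L - h)\<^sup>2 < a * f L + \<delta> * L\<^sup>2"
    using has_real_derivative_pos_inc_left by blast
  define h where "h = min (d/2) L"
  have hh: "h > 0" "h < d" "L - h \<in> {-L..L}" using d L by (auto simp: h_def)
  have "a * f (L - h) + \<delta> * (L - h)\<^sup>2 < a * f L + \<delta> * L\<^sup>2" using d(2) hh by blast
  moreover have "a * f L + \<delta> * L\<^sup>2 \<le> a * f (L - h) + \<delta> * (L - h)\<^sup>2" using mn hh(3) by blast
  ultimately show False by linarith
qed

lemma boundary_left: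
  fixes f :: "real \<Rightarrow> real"
  assumes df: "(f has_real_derivative 0) (at (-L) within {-L..L})" and L: "L > 0"
    and dl: "\<delta> > 0" and a: "a > 0"
    and mn: "\<forall>y\<in>{-L..L}. a * f (-L) + \<delta> * (-L)\<^sup>2 \<le> a * f y + \<delta> * y\<^sup>2"
  shows False
proof -
  have "((\<lambda>y. a * f y + \<delta> * y\<^sup>2) has_real_derivative a * 0 + \<delta> * (2 * (-L))) (at (-L) within {-L..L})"
    by (rule derivative_eq_intros df refl)+ simp
  moreover have "a * 0 + \<delta> * (2 * (-L)) < 0" using dl L by (simp add: mult_pos_neg)
  ultimately obtain d where d: "d > 0"
    "\<And>h. h > 0 \<Longrightarrow> -L + h \<in> {-L..L} \<Longrightarrow> h < d \<Longrightarrow> a * f (-L) + \<delta> * (-L)\<^sup>2 > a * f (-L + h) + \<delta> * (-L + h)\<^sup>2"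
    using has_real_derivative_neg_dec_right by blast
  define h where "h = min (d/2) L"
  have hh: "h > 0" "h < d" "-L + h \<in> {-L..L}" using d L by (auto simp: h_def)
  have "a * f (-L) + \<delta> * (-L)\<^sup>2 > a * f (-L + h) + \<delta> * (-L + h)\<^sup>2" using d(2) hh by blast
  moreover have "a * f (-L) + \<delta> * (-L)\<^sup>2 \<le> a * f (-L + h) + \<delta> * (-L + h)\<^sup>2" using mn hh(3) by blast
  ultimately show False by linarith
qed

theorem proposition2p5:
  fixes \<gamma> \<epsilon> L T Rinf :: real
    and F1 F2 G1 G2 ni1 ni2 :: "real \<Rightarrow> real"
    and n1 n2 :: "real \<Rightarrow> real \<Rightarrow> real"
  assumes "\<gamma> > 1" and "\<epsilon> > 0" and "L > 0" and "T > 0"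
    and "feasible_growth F1 F2 G1 G2"
    and "\<forall>x. ni1 x \<ge> 0" and "\<forall>x. ni2 x \<ge> 0"
    and "\<forall>x. x \<notin> {-L<..<L} \<longrightarrow> ni1 x = 0 \<and> ni2 x = 0"
    and "regularised_solution \<gamma> \<epsilon> L T F1 F2 G1 G2 ni1 ni2 n1 n2"
    and "Rinf > 0"
    and "AE z in lborel. z \<in> {0<..<T} \<times> {-L<..<L} \<longrightarrow>
           \<bar>growth_R \<gamma> F1 F2 G1 G2 n1 n2 (fst z) (snd z)\<bar> \<le> Rinf"
  shows "\<forall>t\<in>{0<..T}. \<forall>x\<in>{-L<..<L}.
           tot_density n1 n2 t x \<ge> 2 * \<epsilon> * exp (- Rinf * t) \<and> 2 * \<epsilon> * exp (- Rinf * t) > 0"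
proof -
  have g1: "\<gamma> > 1" and ep: "\<epsilon> > 0" and L: "L > 0" and T: "T > 0" and Rp: "Rinf > 0"
    using assms by auto
  define N where "N t x = n1 t x + n2 t x" for t x
  have totN: "tot_density n1 n2 = N" by (auto simp: fun_eq_iff tot_density_def N_def)
  have nonneg: "\<forall>t\<in>{0..T}. \<forall>x\<in>{-L..L}. n1 t x \<ge> 0 \<and> n2 t x \<ge> 0"
    and cont1: "continuous_on ({0..T} \<times> {-L..L}) (\<lambda>(t,x). n1 t x)"
    and cont2: "continuous_on ({0..T} \<times> {-L..L}) (\<lambda>(t,x). n2 t x)"
    and init: "\<forall>x\<in>{-L..L}. n1 0 x = ni1 x + \<epsilon> \<and> n2 0 x = ni2 x + \<epsilon>"
    and sdiff: "\<forall>t\<in>{0<..<T}. \<forall>x\<in>{-L..L}.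
        (\<lambda>y. n1 t y) differentiable (at x within {-L..L}) \<and>
        (\<lambda>y. n2 t y) differentiable (at x within {-L..L})"
    and neum: "\<forall>t\<in>{0<..<T}.
        ((\<lambda>y. N t y) has_real_derivative 0) (at L within {-L..L}) \<and>
        ((\<lambda>y. N t y) has_real_derivative 0) (at (-L) within {-L..L})"
    and pde: "\<forall>t\<in>{0<..<T}. \<forall>x\<in>{-L<..<L}.
        (\<lambda>y. N t y powr \<gamma>) differentiable (at x) \<and>
        (\<exists>d1 d2.
          ((\<lambda>y. n1 t y * deriv (\<lambda>z. N t z powr \<gamma>) y) has_real_derivative d1) (at x) \<and>
          ((\<lambda>y. n2 t y * deriv (\<lambda>z. N t z powr \<gamma>) y) has_real_derivative d2) (at x) \<and>
          ((\<lambda>s. n1 s x) has_real_derivative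
              (d1 + n1 t x * F1 (N t x powr \<gamma>) + n2 t x * G1 (N t x powr \<gamma>))) (at t) \<and>
          ((\<lambda>s. n2 s x) has_real_derivative
              (d2 + n1 t x * F2 (N t x powr \<gamma>) + n2 t x * G2 (N t x powr \<gamma>))) (at t))"
    using assms(9) unfolding regularised_solution_def Let_def pressure_def totN by blast+

  have dN: "N = (\<lambda>t x. n1 t x + n2 t x)" by (simp add: N_def fun_eq_iff)
  have isC: "isCont f P" if "C1_bdd_deriv f f'" "P > 0" for f f' P
  proof -
    have "(f has_real_derivative f' P) (at P within {0..})"
      using that unfolding C1_bdd_deriv_def by auto
    moreover have "at P within {0..} = at P"
      using that(2) by (intro at_within_interior) simp
    ultimately show ?thesis using DERIV_isCont by auto
  qed
  obtain F1' F2' G1' G2' where CF: "C1_bdd_deriv F1 F1'" "C1_bdd_deriv F2 F2'"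
      "C1_bdd_deriv G1 G1'" "C1_bdd_deriv G2 G2'"
    using assms(5) unfolding feasible_growth_def by blast
  define S where "S = {0..T} \<times> {-L..L}"
  have contN: "continuous_on S (\<lambda>z. N (fst z) (snd z))"
  proof -
    have "continuous_on S (\<lambda>z. (\<lambda>(t,x). n1 t x) z + (\<lambda>(t,x). n2 t x) z)"
      using continuous_on_add[OF cont1 cont2] by (simp add: S_def)
    thus ?thesis by (simp add: N_def case_prod_unfold)
  qed
  have cptS: "compact S" unfolding S_def by (intro compact_Times compact_Icc)
  obtain B where B: "\<forall>z\<in>S. norm (N (fst z) (snd z)) \<le> B"
    using compact_imp_bounded[OF compact_continuous_image[OF contN cptS]]
    unfolding bounded_iff by auto
  define M where "M = (max B 1) powr \<gamma>"
  have M0: "M \<ge> 0" unfolding M_def by simp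
  have Nnn: "N t x \<ge> 0" if "t \<in> {0..T}" "x \<in> {-L..L}" for t x
    using nonneg that by (auto simp: N_def)
  have Mb: "N t x powr \<gamma> \<le> M" if "t \<in> {0..T}" "x \<in> {-L..L}" for t x
  proof -
    have "N t x \<le> max B 1" using B that by (force simp: S_def)
    thus ?thesis unfolding M_def using Nnn[OF that] g1 by (intro powr_mono2) auto
  qed
  define K where "K = 2 * \<gamma> * M + 1"
  have K0: "K > 0" unfolding K_def using M0 g1 by (simp add: add_nonneg_pos)
  define w where "w \<delta> t x = exp (Rinf * t) * N t x + \<delta> * (x\<^sup>2 + K * t)" for \<delta> t x
  have contNt: "continuous_on {-L..L} (\<lambda>x. N t x)" if "t \<in> {0..T}" for t
  proof -
    have "continuous_on {-L..L} (\<lambda>x. (\<lambda>z. N (fst z) (snd z)) (t, x))"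
      by (rule continuous_on_compose2[OF contN]) (use that in \<open>auto intro!: continuous_intros simp: S_def\<close>)
    thus ?thesis by simp
  qed
  have contNx: "continuous_on {0..T} (\<lambda>t. N t x)" if "x \<in> {-L..L}" for x
  proof -
    have "continuous_on {0..T} (\<lambda>t. (\<lambda>z. N (fst z) (snd z)) (t, x))"
      by (rule continuous_on_compose2[OF contN]) (use that in \<open>auto intro!: continuous_intros simp: S_def\<close>)
    thus ?thesis by simp
  qed
  have main: "c \<le> w \<delta> t x" if dpos: "0 < \<delta>" and dc: "\<delta> * (L\<^sup>2 + K * T) < c"
    and c2: "c < 2 * \<epsilon>" and t1: "0 < t1" "t1 < T" and tx: "t \<in> {0..t1}" "x \<in> {-L..L}"
    for \<delta> c t1 t x
  proof (rule ccontr)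
    assume neg0: "\<not> c \<le> w \<delta> t x"
    define S1 where "S1 = {0..t1} \<times> {-L..L}"
    have S1S: "S1 \<subseteq> S" using t1 by (auto simp: S1_def S_def)
    define W where "W z = w \<delta> (fst z) (snd z)" for z
    have contW: "continuous_on S1 W" unfolding W_def w_def
      by (intro continuous_intros continuous_on_subset[OF contN S1S])
    define A where "A = S1 \<inter> W -` {..c}"
    have clA: "closed A" unfolding A_def
      by (rule continuous_closed_preimage[OF contW]) (auto simp: S1_def intro: closed_Times)
    have cptS1: "compact S1" unfolding S1_def by (intro compact_Times compact_Icc)
    have cptA: "compact A"
    proof -
      have "compact (S1 \<inter> A)" using cptS1 clA by (rule compact_Int_closed)
      moreover have "S1 \<inter> A = A" by (auto simp: A_def)
      ultimately show ?thesis by simp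
    qed
    have "(t, x) \<in> A" using tx neg0 by (auto simp: A_def S1_def W_def)
    hence neA: "A \<noteq> {}" by auto
    obtain z0 where z0: "z0 \<in> A" "\<forall>z\<in>A. fst z0 \<le> fst z"
      using continuous_attains_inf[OF cptA neA continuous_on_fst[OF continuous_on_id]] by auto
    define \<tau> where "\<tau> = fst z0"
    have tau01: "0 \<le> \<tau>" "\<tau> \<le> t1" and sz0: "snd z0 \<in> {-L..L}" and Wz0: "W z0 \<le> c"
      using z0(1) by (auto simp: A_def S1_def \<tau>_def mem_Times_iff)
    have tauT: "\<tau> \<in> {0..T}" using tau01 t1 by auto
    have contWt: "continuous_on {-L..L} (\<lambda>y. w \<delta> \<tau> y)" unfolding w_def
      by (intro continuous_intros contNt[OF tauT])
    have neL: "{-L..L} \<noteq> {}" using L by auto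
    obtain x1 where x1: "x1 \<in> {-L..L}" "\<forall>y\<in>{-L..L}. w \<delta> \<tau> x1 \<le> w \<delta> \<tau> y"
      using continuous_attains_inf[OF compact_Icc neL contWt] by blast
    have wle: "w \<delta> \<tau> x1 \<le> c"
    proof -
      have "w \<delta> \<tau> x1 \<le> w \<delta> \<tau> (snd z0)" using x1 sz0 by blast
      also have "\<dots> = W z0" by (simp add: W_def \<tau>_def)
      finally show ?thesis using Wz0 by simp
    qed
    have before: "c < w \<delta> s y" if "s \<in> {0..<\<tau>}" "y \<in> {-L..L}" for s y
    proof (rule ccontr)
      assume "\<not> c < w \<delta> s y"
      hence "(s, y) \<in> A" using that tau01 by (auto simp: A_def S1_def W_def)
      hence "\<tau> \<le> s" using z0(2) by (force simp: \<tau>_def)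
      thus False using that by simp
    qed
    have taupos: "\<tau> > 0"
    proof (rule ccontr)
      assume "\<not> \<tau> > 0"
      hence t0: "\<tau> = 0" using tau01 by simp
      have "N 0 x1 = ni1 x1 + ni2 x1 + 2 * \<epsilon>" using init x1(1) by (simp add: N_def)
      hence "N 0 x1 \<ge> 2 * \<epsilon>" using assms(6,7) by (smt (verit))
      hence "w \<delta> 0 x1 \<ge> 2 * \<epsilon>" unfolding w_def using dpos
        by (smt (verit) exp_zero mult_cancel_right1 mult_zero_left zero_le_mult_iff zero_le_power2)
      thus False using wle t0 c2 by simp
    qed
    have wge: "c \<le> w \<delta> \<tau> x1"
    proof -
      have cc: "continuous_on {0..\<tau>} (\<lambda>s. w \<delta> s x1)" unfolding w_def
        by (intro continuous_intros continuous_on_subset[OF contNx[OF x1(1)]]) (use tauT in auto)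
      define C where "C = {0..\<tau>} \<inter> (\<lambda>s. w \<delta> s x1) -` {c..}"
      have "closed C" unfolding C_def by (rule continuous_closed_preimage[OF cc]) auto
      moreover have "{0..<\<tau>} \<subseteq> C" using before x1(1) by (auto simp: C_def less_imp_le)
      ultimately have "closure {0..<\<tau>} \<subseteq> C" by (rule closure_minimal[rotated])
      hence "{0..\<tau>} \<subseteq> C" using taupos by simp
      thus ?thesis using tau01 by (auto simp: C_def)
    qed
    have weq: "w \<delta> \<tau> x1 = c" using wle wge by simp
    have tauT': "\<tau> \<in> {0<..<T}" using taupos tau01 t1 by auto
    define a where "a = exp (Rinf * \<tau>)"
    have apos: "a > 0" unfolding a_def by simp
    have x1sq: "x1\<^sup>2 \<le> L\<^sup>2"
    proof -
      have "\<bar>x1\<bar> \<le> \<bar>L\<bar>" using x1(1) L by auto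
      thus ?thesis by (simp add: abs_le_square_iff)
    qed
    have "K * \<tau> \<le> K * T" using K0 tau01 t1 by (intro mult_left_mono) auto
    hence "\<delta> * (x1\<^sup>2 + K * \<tau>) \<le> \<delta> * (L\<^sup>2 + K * T)"
      using x1sq dpos by (intro mult_left_mono) auto
    hence "a * N \<tau> x1 > 0" using weq dc unfolding w_def a_def by linarith
    hence Npos: "N \<tau> x1 > 0" using apos by (simp add: zero_less_mult_iff)
    have minsp: "\<forall>y\<in>{-L..L}. a * N \<tau> x1 + \<delta> * x1\<^sup>2 \<le> a * N \<tau> y + \<delta> * y\<^sup>2"
      using x1(2) unfolding w_def a_def by (simp add: algebra_simps)
    have x1L: "x1 \<noteq> L"
    proof
      assume "x1 = L"
      thus False using boundary_right[of "\<lambda>y. N \<tau> y" L \<delta> a] neum tauT' L dpos apos minsp by auto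
    qed
    have x1mL: "x1 \<noteq> -L"
    proof
      assume "x1 = -L"
      thus False using boundary_left[of "\<lambda>y. N \<tau> y" L \<delta> a] neum tauT' L dpos apos minsp by auto
    qed
    have x1in: "x1 \<in> {-L<..<L}" using x1(1) x1L x1mL by auto
    obtain d1 d2 where
      dd1: "((\<lambda>y. n1 \<tau> y * deriv (\<lambda>z. N \<tau> z powr \<gamma>) y) has_real_derivative d1) (at x1)" and
      dd2: "((\<lambda>y. n2 \<tau> y * deriv (\<lambda>z. N \<tau> z powr \<gamma>) y) has_real_derivative d2) (at x1)" and
      dt1: "((\<lambda>s. n1 s x1) has_real_derivative
              (d1 + n1 \<tau> x1 * F1 (N \<tau> x1 powr \<gamma>) + n2 \<tau> x1 * G1 (N \<tau> x1 powr \<gamma>))) (at \<tau>)" and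
      dt2: "((\<lambda>s. n2 s x1) has_real_derivative
              (d2 + n1 \<tau> x1 * F2 (N \<tau> x1 powr \<gamma>) + n2 \<tau> x1 * G2 (N \<tau> x1 powr \<gamma>))) (at \<tau>)"
      using pde tauT' x1in by blast
    define U where "U = {-L<..<L} \<inter> (\<lambda>y. N \<tau> y) -` {0<..}"
    have openU: "open U" unfolding U_def
      by (rule continuous_open_preimage[OF continuous_on_subset[OF contNt[OF tauT]]]) auto
    have x1U: "x1 \<in> U" using x1in Npos by (simp add: U_def)
    have Upos: "\<forall>y\<in>U. N \<tau> y > 0" by (simp add: U_def)
    have Udiff: "\<forall>y\<in>U. (\<lambda>y. N \<tau> y) differentiable (at y)"
    proof
      fix y assume "y \<in> U"
      hence yin: "y \<in> {-L<..<L}" by (simp add: U_def)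
      hence eq: "at y within {-L..L} = at y" by (intro at_within_interior) simp
      have "(\<lambda>y. n1 \<tau> y) differentiable (at y)" "(\<lambda>y. n2 \<tau> y) differentiable (at y)"
      proof -
        have "y \<in> {-L..L}" using yin by auto
        hence "(\<lambda>y. n1 \<tau> y) differentiable (at y within {-L..L})"
          "(\<lambda>y. n2 \<tau> y) differentiable (at y within {-L..L})"
          using sdiff tauT' by blast+
        thus "(\<lambda>y. n1 \<tau> y) differentiable (at y)" "(\<lambda>y. n2 \<tau> y) differentiable (at y)"
          by (simp_all only: eq)
      qed
      thus "(\<lambda>y. N \<tau> y) differentiable (at y)" unfolding N_def by (rule differentiable_add)
    qed
    have dd: "((\<lambda>y. N \<tau> y * deriv (\<lambda>z. N \<tau> z powr \<gamma>) y) has_real_derivative d1 + d2) (at x1)"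
    proof -
      have "((\<lambda>y. n1 \<tau> y * deriv (\<lambda>z. N \<tau> z powr \<gamma>) y + n2 \<tau> y * deriv (\<lambda>z. N \<tau> z powr \<gamma>) y)
              has_real_derivative d1 + d2) (at x1)" by (rule DERIV_add[OF dd1 dd2])
      moreover have "(\<lambda>y. n1 \<tau> y * deriv (\<lambda>z. N \<tau> z powr \<gamma>) y + n2 \<tau> y * deriv (\<lambda>z. N \<tau> z powr \<gamma>) y)
          = (\<lambda>y. N \<tau> y * deriv (\<lambda>z. N \<tau> z powr \<gamma>) y)"
        by (rule ext) (simp add: N_def algebra_simps)
      ultimately show ?thesis by simp
    qed
    have minU: "\<forall>y\<in>U. a * N \<tau> x1 + \<delta> * x1\<^sup>2 \<le> a * N \<tau> y + \<delta> * y\<^sup>2"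
      using minsp by (auto simp: U_def)
    have sp: "a * (d1 + d2) \<ge> - 2 * \<delta> * \<gamma> * (N \<tau> x1 powr \<gamma>)"
      using spatial_bound[of \<gamma> a \<delta> U x1 "\<lambda>y. N \<tau> y" "d1 + d2"] g1 apos dpos openU x1U Upos Udiff minU dd
      by simp
    define P where "P = N \<tau> x1 powr \<gamma>"
    have PM: "P \<le> M" unfolding P_def using Mb tauT x1(1) by blast
    define R where "R = growth_R \<gamma> F1 F2 G1 G2 n1 n2 \<tau> x1"
    have NR: "n1 \<tau> x1 * (F1 P + F2 P) + n2 \<tau> x1 * (G1 P + G2 P) = N \<tau> x1 * R"
    proof -
      have Req: "R = n1 \<tau> x1 / N \<tau> x1 * (F1 P + F2 P) + n2 \<tau> x1 / N \<tau> x1 * (G1 P + G2 P)"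
        unfolding R_def growth_R_def Let_def pressure_def totN P_def by simp
      show ?thesis using Npos unfolding Req by (simp add: field_simps)
    qed
    have Rb: "R \<ge> - Rinf"
    proof -
      define z0 where "z0 = (\<tau>, x1)"
      have z0i: "z0 \<in> interior S" unfolding S_def z0_def interior_Times using tauT' x1in by simp
      have cont1': "continuous_on S (\<lambda>z. n1 (fst z) (snd z))"
        using cont1 by (simp add: S_def case_prod_unfold)
      have cont2': "continuous_on S (\<lambda>z. n2 (fst z) (snd z))"
        using cont2 by (simp add: S_def case_prod_unfold)
      have c1: "isCont (\<lambda>z. n1 (fst z) (snd z)) z0" by (rule continuous_on_interior[OF cont1' z0i])
      have c2: "isCont (\<lambda>z. n2 (fst z) (snd z)) z0" by (rule continuous_on_interior[OF cont2' z0i])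
      have cN: "isCont (\<lambda>z. N (fst z) (snd z)) z0" unfolding N_def using c1 c2 by (rule isCont_add)
      have Nz0: "N (fst z0) (snd z0) > 0" using Npos by (simp add: z0_def)
      have cP: "isCont (\<lambda>z. N (fst z) (snd z) powr \<gamma>) z0"
        using cN Nz0 by (intro continuous_at_within_powr) auto
      have Pz0: "N (fst z0) (snd z0) powr \<gamma> > 0" using Nz0 by simp
      have cF: "isCont (\<lambda>z. f (N (fst z) (snd z) powr \<gamma>)) z0" if "C1_bdd_deriv f f'" for f f'
        by (rule isCont_o2[OF cP isC[OF that Pz0]])
      have feq: "(\<lambda>z. growth_R \<gamma> F1 F2 G1 G2 n1 n2 (fst z) (snd z)) =
         (\<lambda>z. n1 (fst z) (snd z) / N (fst z) (snd z) * (F1 (N (fst z) (snd z) powr \<gamma>) + F2 (N (fst z) (snd z) powr \<gamma>))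
            + n2 (fst z) (snd z) / N (fst z) (snd z) * (G1 (N (fst z) (snd z) powr \<gamma>) + G2 (N (fst z) (snd z) powr \<gamma>)))"
        by (simp add: fun_eq_iff growth_R_def Let_def pressure_def totN)
      have cR: "isCont (\<lambda>z. growth_R \<gamma> F1 F2 G1 G2 n1 n2 (fst z) (snd z)) z0"
        unfolding feq
        by (intro isCont_add isCont_mult isCont_divide c1 c2 cN cF[OF CF(1)] cF[OF CF(2)]
              cF[OF CF(3)] cF[OF CF(4)]) (use Nz0 in auto)
      have "\<bar>(\<lambda>z. growth_R \<gamma> F1 F2 G1 G2 n1 n2 (fst z) (snd z)) z0\<bar> \<le> Rinf"
        by (rule ae_cont_bound[OF assms(11) _ _ cR]) (use tauT' x1in in \<open>auto simp: z0_def intro: open_Times\<close>)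
      thus ?thesis by (simp add: R_def z0_def)
    qed
    define Dt where "Dt = Rinf * a * N \<tau> x1 + a * ((d1 + n1 \<tau> x1 * F1 P + n2 \<tau> x1 * G1 P)
                     + (d2 + n1 \<tau> x1 * F2 P + n2 \<tau> x1 * G2 P)) + \<delta> * K"
    have dt: "((\<lambda>s. w \<delta> s x1) has_real_derivative Dt) (at \<tau>)"
    proof -
      have "((\<lambda>s. exp (Rinf * s) * (n1 s x1 + n2 s x1) + \<delta> * (x1\<^sup>2 + K * s)) has_real_derivative Dt) (at \<tau>)"
        unfolding Dt_def a_def P_def
        by (rule derivative_eq_intros dt1 dt2 refl)+ (simp add: N_def algebra_simps)
      thus ?thesis by (simp add: w_def N_def)
    qed
    have Dtpos: "Dt > 0"
    proof -
      have e1: "Dt = a * (d1 + d2) + a * (N \<tau> x1 * (Rinf + R)) + \<delta> * K"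
        unfolding Dt_def using NR by (simp add: algebra_simps)
      have "a * (N \<tau> x1 * (Rinf + R)) \<ge> 0" using apos Npos Rb by simp
      moreover have "- 2 * \<delta> * \<gamma> * P \<ge> - 2 * \<delta> * \<gamma> * M" using PM dpos g1 by simp
      ultimately have "Dt \<ge> - 2 * \<delta> * \<gamma> * M + \<delta> * K" using e1 sp unfolding P_def by linarith
      thus ?thesis unfolding K_def using dpos by (simp add: algebra_simps)
    qed
    obtain d0 where d0: "d0 > 0" "\<And>h. h > 0 \<Longrightarrow> h < d0 \<Longrightarrow> w \<delta> (\<tau> - h) x1 < w \<delta> \<tau> x1"
      using DERIV_pos_inc_left[OF dt Dtpos] by blast
    define h where "h = min (d0/2) \<tau>"
    have hh: "h > 0" "h < d0" "\<tau> - h \<in> {0..<\<tau>}" using d0 taupos by (auto simp: h_def)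
    have "w \<delta> (\<tau> - h) x1 < c" using d0(2)[OF hh(1,2)] weq by simp
    moreover have "c < w \<delta> (\<tau> - h) x1" using before[OF hh(3) x1(1)] .
    ultimately show False by simp
  qed
  have LKT: "L\<^sup>2 + K * T > 0" using L K0 T by (simp add: add_pos_pos)
  have inner: "2 * \<epsilon> \<le> exp (Rinf * t) * N t x" if tt: "t \<in> {0<..<T}" and xx: "x \<in> {-L..L}" for t x
  proof (rule ccontr)
    assume "\<not> 2 * \<epsilon> \<le> exp (Rinf * t) * N t x"
    define E where "E = exp (Rinf * t) * N t x"
    have gap: "2 * \<epsilon> - E > 0" using \<open>\<not> _\<close> by (simp add: E_def)
    define \<eta> where "\<eta> = min (\<epsilon>/2) ((2 * \<epsilon> - E)/2)"
    have eta: "\<eta> > 0" "\<eta> \<le> \<epsilon>/2" "\<eta> \<le> (2 * \<epsilon> - E)/2" using gap ep unfolding \<eta>_def by (simp_all add: min_def)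
    define \<delta> where "\<delta> = \<eta> / (2 * (L\<^sup>2 + K * T))"
    have dpos: "\<delta> > 0" using eta LKT by (simp add: \<delta>_def)
    have gQ: "\<And>Q::real. Q > 0 \<Longrightarrow> \<eta> / (2 * Q) * Q = \<eta> / 2" by simp
    have dL: "\<delta> * (L\<^sup>2 + K * T) = \<eta> / 2" unfolding \<delta>_def by (rule gQ[OF LKT])
    define c where "c = 2 * \<epsilon> - \<eta>"
    have "c \<le> w \<delta> t x"
      by (rule main[of \<delta> c t t x]) (use dpos dL eta tt xx ep in \<open>auto simp: c_def\<close>)
    moreover have x1sq: "x\<^sup>2 \<le> L\<^sup>2"
    proof -
      have "\<bar>x\<bar> \<le> \<bar>L\<bar>" using xx L by auto
      thus ?thesis by (simp add: abs_le_square_iff)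
    qed
    have "K * t \<le> K * T" using K0 tt by (intro mult_left_mono) auto
    hence "\<delta> * (x\<^sup>2 + K * t) \<le> \<delta> * (L\<^sup>2 + K * T)"
      using x1sq dpos by (intro mult_left_mono) auto
    ultimately have "c \<le> E + \<eta> / 2" unfolding w_def E_def using dL by linarith
    hence h1: "2 * \<epsilon> - E \<le> 3 / 2 * \<eta>" unfolding c_def by simp
    have "3 / 2 * \<eta> \<le> 3 / 4 * (2 * \<epsilon> - E)" using eta(3) by simp
    thus False using h1 gap by simp
  qed
  have inner2: "2 * \<epsilon> * exp (- Rinf * t) \<le> N t x" if tt: "t \<in> {0<..<T}" and xx: "x \<in> {-L..L}" for t x
  proof -
    have "2 * \<epsilon> * exp (- Rinf * t) \<le> exp (Rinf * t) * N t x * exp (- Rinf * t)"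
      using inner[OF tt xx] by (intro mult_right_mono) auto
    also have "\<dots> = N t x * (exp (Rinf * t) * exp (- Rinf * t))" by (simp add: algebra_simps)
    also have "exp (Rinf * t) * exp (- Rinf * t) = 1" by (simp add: exp_add[symmetric])
    finally show ?thesis by simp
  qed
  have allT: "2 * \<epsilon> * exp (- Rinf * t) \<le> N t x" if tt: "t \<in> {0<..T}" and xx: "x \<in> {-L..L}" for t x
  proof (cases "t < T")
    case True thus ?thesis using inner2 tt xx by auto
  next
    case False
    hence tT: "t = T" using tt by auto
    have cc: "continuous_on {0..T} (\<lambda>s. N s x - 2 * \<epsilon> * exp (- Rinf * s))"
      by (intro continuous_intros contNx[OF xx])
    define C where "C = {0..T} \<inter> (\<lambda>s. N s x - 2 * \<epsilon> * exp (- Rinf * s)) -` {0..}"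
    have "closed C" unfolding C_def by (rule continuous_closed_preimage[OF cc]) auto
    moreover have "{0<..<T} \<subseteq> C" using inner2 xx by (auto simp: C_def)
    ultimately have "closure {0<..<T} \<subseteq> C" by (rule closure_minimal[rotated])
    hence "{0..T} \<subseteq> C" using T by simp
    hence "T \<in> C" using T by auto
    thus ?thesis using tT by (simp add: C_def)
  qed
  show ?thesis
    using allT ep unfolding totN by auto
qed
end
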